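(* Let $G$ be a countable group, $\mu$ a probability measure on $G$, and $(X,\xi)$ a $(G,\mu)$-stationary space. Then the map \[ [2,\infty)\to[0,\infty),\qquad p\mapsto-p\log\|\pi_{q,X}(\mu)\|, \] where $q$ is the conjugate exponent of $p$ and $\|\cdot\|$ is the operator norm on $B(L^q(X,\xi))$, is increasing and bounded by $h_\mu(X,\xi)$.
   Context: A $(G,\mu)$-stationary space is a standard probability space $(X,\xi)$ with a measurable non-singular $G$-action such that $\sum_s\mu(s)\xi(s^{-1}A)=\xi(A)$. Write $(s\xi)(A)=\xi(s^{-1}A)$ and $\rho(s,x)=\frac{d(s^{-1}\xi)}{d\xi}(x)$. The $L^q$-Koopman representation is $[\pi_{q,X}(s)f](x)=[\frac{d(s\xi)}{d\xi}(x)]^{1/q}f(s^{-1}x)$ on $L^q(X,\xi)$, and $\pi_{q,X}(\mu)=\sum_s\mu(s)\pi_{q,X}(s)$. The Furstenberg entropy is $h_\mu(X,\xi)=-\sum_s\mu(s)\int_X\log\rho(s,x)d\xi(x)$. *)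

theory Defs
  imports "HOL-Probability.Probability" "HOL-Algebra.Group"
begin

definition stationary_space ::
  "('g, 'b) monoid_scheme \<Rightarrow> 'g pmf \<Rightarrow> ('g \<Rightarrow> 'x \<Rightarrow> 'x) \<Rightarrow> 'x measure \<Rightarrow> bool" where
  "stationary_space G \<mu> act M \<longleftrightarrow>
     prob_space M \<and>
     (\<forall>g\<in>carrier G. act g \<in> M \<rightarrow>\<^sub>M M) \<and>
     (\<forall>x\<in>space M. act \<one>\<^bsub>G\<^esub> x = x) \<and>
     (\<forall>g\<in>carrier G. \<forall>h\<in>carrier G. \<forall>x\<in>space M. act (g \<otimes>\<^bsub>G\<^esub> h) x = act g (act h x)) \<and>
     (\<forall>g\<in>carrier G. \<forall>A\<in>sets M.
         emeasure M (act g -` A \<inter> space M) = 0 \<longleftrightarrow> emeasure M A = 0) \<and>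
     (\<forall>A\<in>sets M.
         (\<Sum>\<^sub>\<infinity>s\<in>carrier G. pmf \<mu> s * measure M (act s -` A \<inter> space M)) = measure M A)"

definition Lq_space :: "'x measure \<Rightarrow> real \<Rightarrow> ('x \<Rightarrow> complex) set" where
  "Lq_space M q = {f. f \<in> borel_measurable M \<and> integrable M (\<lambda>x. norm (f x) powr q)}"

definition Lq_norm :: "'x measure \<Rightarrow> real \<Rightarrow> ('x \<Rightarrow> complex) \<Rightarrow> real" where
  "Lq_norm M q f = (\<integral>x. norm (f x) powr q \<partial>M) powr (1 / q)"

definition Lq_opnorm :: "'x measure \<Rightarrow> real \<Rightarrow> (('x \<Rightarrow> complex) \<Rightarrow> ('x \<Rightarrow> complex)) \<Rightarrow> real" where
  "Lq_opnorm M q T = Sup {Lq_norm M q (T f) | f. f \<in> Lq_space M q \<and> Lq_norm M q f \<le> 1}"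

text \<open>pi_{q,X}(mu) f (x) = sum_s mu(s) [d(s xi)/d xi (x)]^{1/q} f(s^{-1} x),
where s xi = distr M M (act s), i.e. (s xi)(A) = xi(s^{-1} A).\<close>

definition koopman_mu ::
  "('g, 'b) monoid_scheme \<Rightarrow> 'g pmf \<Rightarrow> ('g \<Rightarrow> 'x \<Rightarrow> 'x) \<Rightarrow> 'x measure \<Rightarrow> real
     \<Rightarrow> ('x \<Rightarrow> complex) \<Rightarrow> ('x \<Rightarrow> complex)" where
  "koopman_mu G \<mu> act M q f = (\<lambda>x. \<Sum>\<^sub>\<infinity>s\<in>carrier G.
      complex_of_real (pmf \<mu> s * enn2real (RN_deriv M (distr M M (act s)) x) powr (1 / q))
        * f (act (inv\<^bsub>G\<^esub> s) x))"

definition rn_rho ::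
  "('g, 'b) monoid_scheme \<Rightarrow> ('g \<Rightarrow> 'x \<Rightarrow> 'x) \<Rightarrow> 'x measure \<Rightarrow> 'g \<Rightarrow> 'x \<Rightarrow> real" where
  "rn_rho G act M s x = enn2real (RN_deriv M (distr M M (act (inv\<^bsub>G\<^esub> s))) x)"

text \<open>Furstenberg entropy h = - sum_s mu(s) int log rho(s,x) dxi, valued in [0,infinity];
the integral - int log rho is written as (int (log rho)^- ) - (int (log rho)^+),
the positive part being finite (it is at most int rho = 1).\<close>

definition furstenberg_entropy ::
  "('g, 'b) monoid_scheme \<Rightarrow> 'g pmf \<Rightarrow> ('g \<Rightarrow> 'x \<Rightarrow> 'x) \<Rightarrow> 'x measure \<Rightarrow> ennreal" where
  "furstenberg_entropy G \<mu> act M = (\<Sum>\<^sub>\<infinity>s\<in>carrier G. ennreal (pmf \<mu> s) *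
      ((\<integral>\<^sup>+x. ennreal (- ln (rn_rho G act M s x)) \<partial>M)
        - (\<integral>\<^sup>+x. ennreal (ln (rn_rho G act M s x)) \<partial>M)))"

end

theory Submission
  imports Defs
begin

lemma young_nonneg:
  fixes a b :: real
  assumes "0 \<le> \<alpha>" "0 \<le> \<beta>" "\<alpha>+\<beta> = 1" "a \<ge> 0" "b \<ge> 0"
  shows "a powr \<alpha> * b powr \<beta> \<le> \<alpha>*a + \<beta>*b"
proof (cases "a > 0 \<and> b > 0")
  case True then show ?thesis using Youngs_inequality_0[OF assms(1-3)] by auto
next
  case False
  then have "a = 0 \<or> b = 0" using assms by auto
  then show ?thesis using assms by auto
qed

lemma holder_nn:
  fixes X Y :: "'a \<Rightarrow> real"
  assumes [measurable]: "X \<in> borel_measurable N" "Y \<in> borel_measurable N"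
    and nX: "\<And>x. x \<in> space N \<Longrightarrow> X x \<ge> 0" and nY: "\<And>x. x \<in> space N \<Longrightarrow> Y x \<ge> 0"
    and ab: "\<alpha> > 0" "\<beta> > 0" "\<alpha> + \<beta> = 1"
    and iX: "(\<integral>\<^sup>+x. ennreal (X x) \<partial>N) \<le> ennreal a"
    and iY: "(\<integral>\<^sup>+x. ennreal (Y x) \<partial>N) \<le> ennreal b"
    and a0: "a \<ge> 0" and b0: "b \<ge> 0"
  shows "(\<integral>\<^sup>+x. ennreal (X x powr \<alpha> * Y x powr \<beta>) \<partial>N) \<le> ennreal (a powr \<alpha> * b powr \<beta>)"
proof (cases "a = 0 \<or> b = 0")
  case True
  then show ?thesis
  proof
    assume "a = 0"
    then have "(\<integral>\<^sup>+x. ennreal (X x) \<partial>N) = 0" using iX by simp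
    then have "AE x in N. ennreal (X x) = 0" by (simp add: nn_integral_0_iff_AE)
    then have "AE x in N. ennreal (X x powr \<alpha> * Y x powr \<beta>) = 0"
      by (rule AE_mp) (auto intro!: AE_I2 simp: nX)
    then have "(\<integral>\<^sup>+x. ennreal (X x powr \<alpha> * Y x powr \<beta>) \<partial>N) = 0"
      by (simp add: nn_integral_0_iff_AE)
    then show ?thesis by simp
  next
    assume "b = 0"
    then have "(\<integral>\<^sup>+x. ennreal (Y x) \<partial>N) = 0" using iY by simp
    then have "AE x in N. ennreal (Y x) = 0" by (simp add: nn_integral_0_iff_AE)
    then have "AE x in N. ennreal (X x powr \<alpha> * Y x powr \<beta>) = 0"
      by (rule AE_mp) (auto intro!: AE_I2 simp: nY)
    then have "(\<integral>\<^sup>+x. ennreal (X x powr \<alpha> * Y x powr \<beta>) \<partial>N) = 0"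
      by (simp add: nn_integral_0_iff_AE)
    then show ?thesis by simp
  qed
next
  case False
  then have a: "a > 0" and b: "b > 0" using a0 b0 by auto
  define c where "c = a powr \<alpha> * b powr \<beta>"
  have c0: "c \<ge> 0" by (simp add: c_def)
  have pw: "X x powr \<alpha> * Y x powr \<beta> \<le> c * (\<alpha>/a) * X x + c * (\<beta>/b) * Y x" if "x \<in> space N" for x
  proof -
    have "X x powr \<alpha> * Y x powr \<beta> = c * ((X x / a) powr \<alpha> * (Y x / b) powr \<beta>)"
      using a b nX[OF that] nY[OF that]
      by (simp add: c_def powr_divide field_simps)
    also have "\<dots> \<le> c * (\<alpha> * (X x / a) + \<beta> * (Y x / b))"
      using young_nonneg[of \<alpha> \<beta> "X x / a" "Y x / b"] ab a b nX[OF that] nY[OF that] c0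
      by (intro mult_left_mono) auto
    finally show ?thesis by (simp add: algebra_simps)
  qed
  have "(\<integral>\<^sup>+x. ennreal (X x powr \<alpha> * Y x powr \<beta>) \<partial>N)
      \<le> (\<integral>\<^sup>+x. ennreal (c * (\<alpha>/a)) * ennreal (X x) + ennreal (c * (\<beta>/b)) * ennreal (Y x) \<partial>N)"
    using pw nX nY c0 a b ab
    by (intro nn_integral_mono) (simp add: ennreal_mult[symmetric] ennreal_plus[symmetric] del: ennreal_plus)
  also have "\<dots> = ennreal (c * (\<alpha>/a)) * (\<integral>\<^sup>+x. ennreal (X x) \<partial>N) + ennreal (c * (\<beta>/b)) * (\<integral>\<^sup>+x. ennreal (Y x) \<partial>N)"
    by (simp add: nn_integral_add nn_integral_cmult)
  also have "\<dots> \<le> ennreal (c * (\<alpha>/a)) * ennreal a + ennreal (c * (\<beta>/b)) * ennreal b"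
    by (intro add_mono mult_left_mono iX iY) auto
  also have "\<dots> = ennreal (c * (\<alpha>/a) * a + c * (\<beta>/b) * b)"
    using a b c0 ab by (simp add: ennreal_mult[symmetric] ennreal_plus[symmetric] del: ennreal_plus)
  also have "c * (\<alpha>/a) * a + c * (\<beta>/b) * b = c"
  proof -
    have "c * (\<alpha>/a) * a + c * (\<beta>/b) * b = c * (\<alpha> + \<beta>)" using a b by (simp add: field_simps)
    then show ?thesis using ab by simp
  qed
  finally show ?thesis by (simp add: c_def)
qed

lemma sum_le_nn_integral_count_space:
  fixes f :: "'a \<Rightarrow> ennreal"
  assumes "finite F" "F \<subseteq> A"
  shows "sum f F \<le> (\<integral>\<^sup>+x. f x \<partial>count_space A)"
proof -
  have "sum f F = (\<integral>\<^sup>+x. f x \<partial>count_space F)" using assms by (simp add: nn_integral_count_space_finite)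
  also have "\<dots> = (\<integral>\<^sup>+x. f x * indicator F x \<partial>count_space UNIV)"
    by (simp add: nn_integral_count_space_indicator)
  also have "\<dots> \<le> (\<integral>\<^sup>+x. f x * indicator A x \<partial>count_space UNIV)"
    using assms by (intro nn_integral_mono) (auto split: split_indicator)
  also have "\<dots> = (\<integral>\<^sup>+x. f x \<partial>count_space A)"
    by (simp add: nn_integral_count_space_indicator)
  finally show ?thesis .
qed

lemma SUP_le_nn_integral_count_space:
  fixes f :: "'a \<Rightarrow> ennreal"
  shows "(SUP F\<in>{F. finite F \<and> F\<subseteq>A}. sum f F) \<le> (\<integral>\<^sup>+x. f x \<partial>count_space A)"
  by (rule SUP_least) (auto intro: sum_le_nn_integral_count_space)

lemma nn_integral_count_space_le_SUP:
  fixes f :: "'a \<Rightarrow> ennreal"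
  assumes "countable A"
  shows "(\<integral>\<^sup>+x. f x \<partial>count_space A) \<le> (SUP F\<in>{F. finite F \<and> F\<subseteq>A}. sum f F)"
proof (cases "finite A")
  case True
  then show ?thesis by (simp add: nn_integral_count_space_finite) (intro SUP_upper2[of A]; auto)
next
  case False
  note * = bij_betw_from_nat_into[OF assms False]
  have "(\<integral>\<^sup>+x. f x \<partial>count_space A) = (\<integral>\<^sup>+n. f (from_nat_into A n) \<partial>count_space UNIV)"
    by (simp add: nn_integral_bij_count_space[symmetric, OF *])
  also have "\<dots> = (\<Sum>n. f (from_nat_into A n))" by (simp add: nn_integral_count_space_nat)
  also have "\<dots> = (SUP n. \<Sum>i<n. f (from_nat_into A i))" by (simp add: suminf_eq_SUP)
  also have "\<dots> \<le> (SUP F\<in>{F. finite F \<and> F\<subseteq>A}. sum f F)"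
  proof (rule SUP_least)
    fix n
    have inj: "inj_on (from_nat_into A) {..<n}" using * by (auto simp: bij_betw_def inj_on_def)
    have "(\<Sum>i<n. f (from_nat_into A i)) = sum f (from_nat_into A ` {..<n})"
      using sum.reindex[OF inj, of f] by simp
    also have "\<dots> \<le> (SUP F\<in>{F. finite F \<and> F\<subseteq>A}. sum f F)"
      using * by (intro SUP_upper) (auto simp: bij_betw_def)
    finally show "(\<Sum>i<n. f (from_nat_into A i)) \<le> \<dots>" .
  qed
  finally show ?thesis .
qed

lemma infsum_ennreal_eq_nn_integral:
  fixes f :: "'a \<Rightarrow> ennreal"
  assumes "countable A"
  shows "infsum f A = (\<integral>\<^sup>+x. f x \<partial>count_space A)"
  using nonneg_infsum_complete[of A f] SUP_le_nn_integral_count_space[of f A]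
    nn_integral_count_space_le_SUP[OF assms, of f]
  by auto

lemma ennreal_infsum_le_nn_integral:
  fixes g :: "'a \<Rightarrow> real"
  assumes "\<And>x. x \<in> A \<Longrightarrow> g x \<ge> 0"
  shows "ennreal (infsum g A) \<le> (\<integral>\<^sup>+x. ennreal (g x) \<partial>count_space A)"
proof (cases "g summable_on A")
  case True
  have "ennreal (infsum g A) = (SUP F\<in>{F. finite F \<and> F \<subseteq> A}. ennreal (sum g F))"
    by (rule infsum_nonneg_is_SUPREMUM_ennreal[OF True assms])
  also have "\<dots> = (SUP F\<in>{F. finite F \<and> F \<subseteq> A}. sum (\<lambda>x. ennreal (g x)) F)"
    using assms by (intro SUP_cong refl) (auto simp: sum_ennreal subset_eq)
  also have "\<dots> \<le> (\<integral>\<^sup>+x. ennreal (g x) \<partial>count_space A)" by (rule SUP_le_nn_integral_count_space)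
  finally show ?thesis .
next
  case False
  then show ?thesis by (simp add: infsum_not_exists)
qed

lemma norm_infsum_le_nn_integral:
  fixes c :: "'a \<Rightarrow> complex"
  shows "ennreal (norm (infsum c A)) \<le> (\<integral>\<^sup>+x. ennreal (norm (c x)) \<partial>count_space A)"
proof (cases "c summable_on A")
  case True
  then have "(\<lambda>x. norm (c x)) summable_on A" using summable_on_iff_abs_summable_on_complex by blast
  then have "norm (infsum c A) \<le> infsum (\<lambda>x. norm (c x)) A" by (rule norm_infsum_bound)
  then have "ennreal (norm (infsum c A)) \<le> ennreal (infsum (\<lambda>x. norm (c x)) A)" by (rule ennreal_leI)
  also have "\<dots> \<le> (\<integral>\<^sup>+x. ennreal (norm (c x)) \<partial>count_space A)" by (rule ennreal_infsum_le_nn_integral) auto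
  finally show ?thesis .
next
  case False
  then show ?thesis by (simp add: infsum_not_exists)
qed

lemma infsum_of_real_nonneg:
  fixes g :: "'a \<Rightarrow> real"
  assumes "countable A" "\<And>x. x \<in> A \<Longrightarrow> g x \<ge> 0"
  shows "infsum (\<lambda>x. complex_of_real (g x)) A = complex_of_real (enn2real (\<integral>\<^sup>+x. ennreal (g x) \<partial>count_space A))"
proof (cases "g summable_on A")
  case True
  have "ennreal (infsum g A) = (SUP F\<in>{F. finite F \<and> F \<subseteq> A}. ennreal (sum g F))"
    by (rule infsum_nonneg_is_SUPREMUM_ennreal[OF True assms(2)])
  also have "\<dots> = (SUP F\<in>{F. finite F \<and> F \<subseteq> A}. sum (\<lambda>x. ennreal (g x)) F)"
    using assms by (intro SUP_cong refl) (auto simp: sum_ennreal subset_eq)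
  also have "\<dots> = (\<integral>\<^sup>+x. ennreal (g x) \<partial>count_space A)"
    using SUP_le_nn_integral_count_space[of "\<lambda>x. ennreal (g x)" A] nn_integral_count_space_le_SUP[OF assms(1), of "\<lambda>x. ennreal (g x)"] by (rule antisym)
  finally have e: "infsum g A = enn2real (\<integral>\<^sup>+x. ennreal (g x) \<partial>count_space A)"
    using infsum_nonneg[of A g] assms(2) by (metis enn2real_ennreal)
  have "((\<lambda>x. complex_of_real (g x)) has_sum complex_of_real (infsum g A)) A"
    using has_sum_of_real_iff[of g A "infsum g A"] True by (simp add: has_sum_infsum)
  then show ?thesis using e infsumI by metis
next
  case False
  have nc: "\<not> (\<lambda>x. complex_of_real (g x)) summable_on A"
    using False summable_on_Re[of "\<lambda>x. complex_of_real (g x)" A] by auto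
  have "(\<integral>\<^sup>+x. ennreal (g x) \<partial>count_space A) = \<top>"
  proof (rule ccontr)
    assume "(\<integral>\<^sup>+x. ennreal (g x) \<partial>count_space A) \<noteq> \<top>"
    then obtain B where B: "(\<integral>\<^sup>+x. ennreal (g x) \<partial>count_space A) = ennreal B" "B \<ge> 0"
      using ennreal_cases[of "(\<integral>\<^sup>+x. ennreal (g x) \<partial>count_space A)"] by blast
    have "bdd_above (sum g ` {F. F\<subseteq>A \<and> finite F})"
    proof (rule bdd_aboveI)
      fix y assume "y \<in> sum g ` {F. F\<subseteq>A \<and> finite F}"
      then obtain F where F: "F \<subseteq> A" "finite F" "y = sum g F" by auto
      have "ennreal (sum g F) = sum (\<lambda>x. ennreal (g x)) F"
        using F assms by (subst sum_ennreal) auto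
      also have "\<dots> \<le> ennreal B" using sum_le_nn_integral_count_space[OF F(2,1), of "\<lambda>x. ennreal (g x)"] B by simp
      finally show "y \<le> B" using F B by (simp add: ennreal_le_iff)
    qed
    then have "g summable_on A" using nonneg_bdd_above_summable_on assms(2) by blast
    then show False using False by simp
  qed
  then show ?thesis using nc by (simp add: infsum_not_exists)
qed

lemma borel_measurable_nn_integral_count_space:
  fixes f :: "'i \<Rightarrow> 'a \<Rightarrow> ennreal"
  assumes "countable I" and "\<And>i. i \<in> I \<Longrightarrow> f i \<in> borel_measurable M"
  shows "(\<lambda>x. \<integral>\<^sup>+i. f i x \<partial>count_space I) \<in> borel_measurable M"
proof -
  interpret sigma_finite_measure "count_space I"
    by (rule sigma_finite_measure_count_space_countable[OF assms(1)])
  have "(\<lambda>(i, x). f i x) \<in> borel_measurable (count_space I \<Otimes>\<^sub>M M)"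
    by (rule measurable_pair_measure_countable1[OF assms(1)]) (simp add: assms(2))
  then have "(\<lambda>(x, i). f i x) \<in> borel_measurable (M \<Otimes>\<^sub>M count_space I)"
    by (subst measurable_pair_swap_iff) (simp add: case_prod_beta)
  then show ?thesis by (intro borel_measurable_nn_integral) (simp add: case_prod_beta)
qed

locale stat =
  fixes G (structure) and \<mu> :: "'g pmf" and act :: "'g \<Rightarrow> 'x \<Rightarrow> 'x" and M :: "'x measure"
  assumes grp: "group G" and cnt: "countable (carrier G)" and supp: "set_pmf \<mu> \<subseteq> carrier G"
    and st: "stationary_space G \<mu> act M"
begin

lemma stD: "prob_space M" "\<And>g. g\<in>carrier G \<Longrightarrow> act g \<in> M \<rightarrow>\<^sub>M M"
  "\<And>x. x\<in>space M \<Longrightarrow> act \<one> x = x"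
  "\<And>g h x. g\<in>carrier G \<Longrightarrow> h\<in>carrier G \<Longrightarrow> x\<in>space M \<Longrightarrow> act (g \<otimes> h) x = act g (act h x)"
  "\<And>g A. g\<in>carrier G \<Longrightarrow> A\<in>sets M \<Longrightarrow> emeasure M (act g -` A \<inter> space M) = 0 \<longleftrightarrow> emeasure M A = 0"
  using st unfolding stationary_space_def by blast+

lemma prob: "prob_space M" by (rule stD(1))

lemma act_meas: "s \<in> carrier G \<Longrightarrow> act s \<in> M \<rightarrow>\<^sub>M M"
  by (rule stD(2))

lemma inv_in: "s \<in> carrier G \<Longrightarrow> inv s \<in> carrier G"
  by (rule group.inv_closed[OF grp])

lemma act_space: "s \<in> carrier G \<Longrightarrow> x \<in> space M \<Longrightarrow> act s x \<in> space M"
  by (rule measurable_space[OF act_meas])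

lemma act_inv1: "s \<in> carrier G \<Longrightarrow> x \<in> space M \<Longrightarrow> act (inv s) (act s x) = x"
proof -
  assume s: "s \<in> carrier G" and x: "x \<in> space M"
  have "act (inv s) (act s x) = act (inv s \<otimes> s) x"
    using stD(4)[OF _ s x, of "inv s"] stD(4)[OF s _ x, of "inv s"] inv_in[OF s] by auto
  also have "\<dots> = act \<one> x" using grp s by (simp add: group.l_inv)
  also have "\<dots> = x" using stD(3)[OF x] .
  finally show ?thesis .
qed

lemma act_inv2: "s \<in> carrier G \<Longrightarrow> x \<in> space M \<Longrightarrow> act s (act (inv s) x) = x"
proof -
  assume s: "s \<in> carrier G" and x: "x \<in> space M"
  have "act s (act (inv s) x) = act (s \<otimes> inv s) x"
    using stD(4)[OF _ s x, of "inv s"] stD(4)[OF s _ x, of "inv s"] inv_in[OF s] by auto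
  also have "\<dots> = act \<one> x" using grp s by (simp add: group.r_inv)
  also have "\<dots> = x" using stD(3)[OF x] .
  finally show ?thesis .
qed

lemma ac: "s \<in> carrier G \<Longrightarrow> absolutely_continuous M (distr M M (act s))"
  unfolding absolutely_continuous_def
proof
  fix A assume s: "s \<in> carrier G" and A: "A \<in> null_sets M"
  then have "emeasure M (act s -` A \<inter> space M) = 0" using stD(5)[OF s] by auto
  then show "A \<in> null_sets (distr M M (act s))"
    using A act_meas[OF s] by (simp add: null_sets_def emeasure_distr)
qed

definition rn :: "'g \<Rightarrow> 'x \<Rightarrow> ennreal" where "rn s = RN_deriv M (distr M M (act s))"
definition rr :: "'g \<Rightarrow> 'x \<Rightarrow> real" where "rr s x = enn2real (rn s x)"

lemma rn_meas[measurable]: "rn s \<in> borel_measurable M" by (simp add: rn_def)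
lemma rr_meas[measurable]: "rr s \<in> borel_measurable M" unfolding rr_def[abs_def] by simp
lemma rr_nonneg: "rr s x \<ge> 0" by (simp add: rr_def)

lemma rn_fin: "s \<in> carrier G \<Longrightarrow> AE x in M. rn s x \<noteq> \<infinity>"
proof -
  assume s: "s \<in> carrier G"
  interpret prob_space M by (rule prob)
  have "prob_space (distr M M (act s))" by (rule prob_space_distr[OF act_meas[OF s]])
  then have "sigma_finite_measure (distr M M (act s))"
    by (simp add: prob_space_imp_sigma_finite)
  then show ?thesis unfolding rn_def using RN_deriv_finite ac[OF s] by simp
qed

lemma cv:
  assumes s: "s \<in> carrier G" and h[measurable]: "h \<in> borel_measurable M"
  shows "(\<integral>\<^sup>+x. rn s x * h x \<partial>M) = (\<integral>\<^sup>+y. h (act s y) \<partial>M)"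
proof -
  interpret prob_space M by (rule prob)
  have "(\<integral>\<^sup>+x. rn s x * h x \<partial>M) = integral\<^sup>N (distr M M (act s)) h"
    unfolding rn_def using ac[OF s] by (subst RN_deriv_nn_integral) auto
  also have "\<dots> = (\<integral>\<^sup>+y. h (act s y) \<partial>M)"
    using act_meas[OF s] by (subst nn_integral_distr) auto
  finally show ?thesis .
qed

lemma rn_int: "s \<in> carrier G \<Longrightarrow> (\<integral>\<^sup>+x. rn s x \<partial>M) = 1"
proof -
  assume s: "s \<in> carrier G"
  interpret prob_space M by (rule prob)
  have "(\<integral>\<^sup>+x. rn s x \<partial>M) = (\<integral>\<^sup>+x. rn s x * 1 \<partial>M)" by simp
  also have "\<dots> = (\<integral>\<^sup>+y. 1 \<partial>M)" using cv[OF s, of "\<lambda>_. 1"] by simp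
  also have "\<dots> = 1" by (simp add: emeasure_space_1)
  finally show ?thesis .
qed

lemma cv_real:
  assumes s: "s \<in> carrier G" and F[measurable]: "F \<in> borel_measurable M"
  shows "(\<integral>\<^sup>+x. ennreal (rr s x * F (act (inv s) x)) \<partial>M) = (\<integral>\<^sup>+y. ennreal (F y) \<partial>M)"
proof -
  have [measurable]: "act (inv s) \<in> M \<rightarrow>\<^sub>M M" "act s \<in> M \<rightarrow>\<^sub>M M" using act_meas inv_in s by auto
  have "(\<integral>\<^sup>+x. ennreal (rr s x * F (act (inv s) x)) \<partial>M) = (\<integral>\<^sup>+x. rn s x * ennreal (F (act (inv s) x)) \<partial>M)"
  proof (rule nn_integral_cong_AE)
    show "AE x in M. ennreal (rr s x * F (act (inv s) x)) = rn s x * ennreal (F (act (inv s) x))"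
      using rn_fin[OF s]
    proof (rule AE_mp, intro AE_I2 impI)
      fix x assume "rn s x \<noteq> \<infinity>"
      then show "ennreal (rr s x * F (act (inv s) x)) = rn s x * ennreal (F (act (inv s) x))"
      proof (cases "F (act (inv s) x) \<ge> 0")
        case True
        then show ?thesis using \<open>rn s x \<noteq> \<infinity>\<close> by (simp add: rr_def ennreal_mult'' ennreal_enn2real_if)
      next
        case False
        then have "rr s x * F (act (inv s) x) \<le> 0" by (simp add: mult_nonneg_nonpos rr_nonneg)
        then show ?thesis using False by (simp add: ennreal_neg)
      qed
    qed
  qed
  also have "\<dots> = (\<integral>\<^sup>+y. ennreal (F (act (inv s) (act s y))) \<partial>M)"
    by (rule cv[OF s]) simp
  also have "\<dots> = (\<integral>\<^sup>+y. ennreal (F y) \<partial>M)"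
    using act_inv1[OF s] by (intro nn_integral_cong) simp
  finally show ?thesis .
qed

end

lemma powr_split3:
  fixes a b c t :: real
  assumes "a \<ge> 0" "b \<ge> 0" "c \<ge> 0"
  shows "(a*b*c) powr t * a powr (1-t) = a * b powr t * c powr t"
proof -
  have "(a*b*c) powr t = a powr t * b powr t * c powr t" using assms by (simp add: powr_mult)
  moreover have "a powr t * a powr (1-t) = a" using assms by (simp add: powr_add[symmetric] powr_one)
  ultimately show ?thesis by (metis (no_types, lifting) mult.commute mult.left_commute)
qed

lemma powr_comb:
  fixes a b c t t0 \<alpha> \<beta> :: real
  assumes "a \<ge> 0" "b \<ge> 0" "c \<ge> 0" "\<alpha> + \<beta> = 1" "t0 * \<alpha> + \<beta> = t"
  shows "(a * b powr t0 * c powr t0) powr \<alpha> * (a*b*c) powr \<beta> = a * b powr t * c powr t"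
proof -
  have 1: "(a * b powr t0 * c powr t0) powr \<alpha> = a powr \<alpha> * b powr (t0*\<alpha>) * c powr (t0*\<alpha>)"
    using assms by (simp add: powr_mult powr_powr)
  have 2: "(a*b*c) powr \<beta> = a powr \<beta> * b powr \<beta> * c powr \<beta>" using assms by (simp add: powr_mult)
  have 3: "a powr \<alpha> * a powr \<beta> = a" using assms by (simp add: powr_add[symmetric] powr_one)
  have 4: "b powr (t0*\<alpha>) * b powr \<beta> = b powr t" using assms by (simp add: powr_add[symmetric])
  have 5: "c powr (t0*\<alpha>) * c powr \<beta> = c powr t" using assms by (simp add: powr_add[symmetric])
  have "(a * b powr t0 * c powr t0) powr \<alpha> * (a*b*c) powr \<beta>
      = (a powr \<alpha> * a powr \<beta>) * (b powr (t0*\<alpha>) * b powr \<beta>) * (c powr (t0*\<alpha>) * c powr \<beta>)"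
    unfolding 1 2 by (simp add: ac_simps)
  then show ?thesis unfolding 3 4 5 .
qed

context stat
begin

definition Bs :: "('x \<Rightarrow> real) \<Rightarrow> 'x \<Rightarrow> ennreal" where
  "Bs F x = (\<integral>\<^sup>+s. ennreal (pmf \<mu> s * rr s x * F (act (inv s) x)) \<partial>count_space (carrier G))"

definition As :: "real \<Rightarrow> ('x \<Rightarrow> real) \<Rightarrow> 'x \<Rightarrow> ennreal" where
  "As t F x = (\<integral>\<^sup>+s. ennreal (pmf \<mu> s * rr s x powr t * F (act (inv s) x) powr t) \<partial>count_space (carrier G))"

lemma actinv_meas: "s \<in> carrier G \<Longrightarrow> act (inv s) \<in> M \<rightarrow>\<^sub>M M"
  using act_meas inv_in by blast

lemma Bs_meas: assumes [measurable]: "F \<in> borel_measurable M" shows "Bs F \<in> borel_measurable M"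
  unfolding Bs_def[abs_def]
proof (rule borel_measurable_nn_integral_count_space[OF cnt])
  fix s assume s: "s \<in> carrier G"
  note [measurable] = actinv_meas[OF s]
  show "(\<lambda>x. ennreal (pmf \<mu> s * rr s x * F (act (inv s) x))) \<in> borel_measurable M" by measurable
qed

lemma As_meas: assumes [measurable]: "F \<in> borel_measurable M" shows "As t F \<in> borel_measurable M"
  unfolding As_def[abs_def]
proof (rule borel_measurable_nn_integral_count_space[OF cnt])
  fix s assume s: "s \<in> carrier G"
  note [measurable] = actinv_meas[OF s]
  show "(\<lambda>x. ennreal (pmf \<mu> s * rr s x powr t * F (act (inv s) x) powr t)) \<in> borel_measurable M" by measurable
qed

lemma pmf_int_le1: "(\<integral>\<^sup>+s. ennreal (pmf \<mu> s) \<partial>count_space A) \<le> 1"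
  by (simp add: nn_integral_pmf measure_pmf.emeasure_le_1)

lemma Bs_int:
  assumes [measurable]: "F \<in> borel_measurable M"
  shows "(\<integral>\<^sup>+x. Bs F x \<partial>M) \<le> (\<integral>\<^sup>+y. ennreal (F y) \<partial>M)"
proof -
  have "(\<integral>\<^sup>+x. Bs F x \<partial>M) = (\<integral>\<^sup>+s. \<integral>\<^sup>+x. ennreal (pmf \<mu> s * rr s x * F (act (inv s) x)) \<partial>M \<partial>count_space (carrier G))"
    unfolding Bs_def
  proof (rule nn_integral_count_space_nn_integral[OF cnt])
    fix s assume s: "s \<in> carrier G"
    note [measurable] = actinv_meas[OF s]
    show "(\<lambda>x. ennreal (pmf \<mu> s * rr s x * F (act (inv s) x))) \<in> borel_measurable M" by measurable
  qed
  also have "\<dots> = (\<integral>\<^sup>+s. ennreal (pmf \<mu> s) * (\<integral>\<^sup>+y. ennreal (F y) \<partial>M) \<partial>count_space (carrier G))"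
  proof (rule nn_integral_cong)
    fix s assume "s \<in> space (count_space (carrier G))"
    then have s: "s \<in> carrier G" by simp
    have "(\<integral>\<^sup>+x. ennreal (pmf \<mu> s * rr s x * F (act (inv s) x)) \<partial>M)
        = (\<integral>\<^sup>+x. ennreal (pmf \<mu> s) * ennreal (rr s x * F (act (inv s) x)) \<partial>M)"
      by (intro nn_integral_cong) (simp add: ennreal_mult' mult.assoc)
    also have "\<dots> = ennreal (pmf \<mu> s) * (\<integral>\<^sup>+x. ennreal (rr s x * F (act (inv s) x)) \<partial>M)"
    proof (rule nn_integral_cmult)
      note [measurable] = actinv_meas[OF s]
      show "(\<lambda>x. ennreal (rr s x * F (act (inv s) x))) \<in> borel_measurable M" by measurable
    qed
    also have "\<dots> = ennreal (pmf \<mu> s) * (\<integral>\<^sup>+y. ennreal (F y) \<partial>M)"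
      using cv_real[OF s] by simp
    finally show "(\<integral>\<^sup>+x. ennreal (pmf \<mu> s * rr s x * F (act (inv s) x)) \<partial>M) = \<dots>" .
  qed
  also have "\<dots> = (\<integral>\<^sup>+s. ennreal (pmf \<mu> s) \<partial>count_space (carrier G)) * (\<integral>\<^sup>+y. ennreal (F y) \<partial>M)"
    by (rule nn_integral_multc) simp
  also have "\<dots> \<le> 1 * (\<integral>\<^sup>+y. ennreal (F y) \<partial>M)"
    by (intro mult_right_mono pmf_int_le1) simp
  finally show ?thesis by simp
qed

lemma pw1:
  assumes t: "0 < t" "t < 1" and x: "x \<in> space M" and F: "\<And>y. y \<in> space M \<Longrightarrow> F y \<ge> 0"
    and fin: "Bs F x \<noteq> \<infinity>"
  shows "As t F x \<le> ennreal (enn2real (Bs F x) powr t)"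
proof -
  define X where "X s = pmf \<mu> s * rr s x * F (act (inv s) x)" for s
  define Y where "Y s = pmf \<mu> s" for s
  have X0: "X s \<ge> 0" if "s \<in> carrier G" for s
    unfolding X_def using F[OF act_space[OF inv_in[OF that] x]] by (simp add: rr_nonneg)
  have "(\<integral>\<^sup>+s. ennreal (X s powr t * Y s powr (1-t)) \<partial>count_space (carrier G))
      \<le> ennreal (enn2real (Bs F x) powr t * 1 powr (1-t))"
  proof (rule holder_nn)
    show "(\<integral>\<^sup>+s. ennreal (X s) \<partial>count_space (carrier G)) \<le> ennreal (enn2real (Bs F x))"
      using fin unfolding X_def Bs_def by (simp add: ennreal_enn2real_if)
    show "(\<integral>\<^sup>+s. ennreal (Y s) \<partial>count_space (carrier G)) \<le> ennreal 1"
      unfolding Y_def using pmf_int_le1 by simp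
  qed (use t X0 in \<open>auto simp: Y_def\<close>)
  moreover have "As t F x = (\<integral>\<^sup>+s. ennreal (X s powr t * Y s powr (1-t)) \<partial>count_space (carrier G))"
    unfolding As_def
  proof (rule nn_integral_cong)
    fix s assume "s \<in> space (count_space (carrier G))"
    then have s: "s \<in> carrier G" by simp
    have "X s powr t * Y s powr (1-t) = pmf \<mu> s * rr s x powr t * F (act (inv s) x) powr t"
      unfolding X_def Y_def
      by (rule powr_split3) (use F[OF act_space[OF inv_in[OF s] x]] in \<open>auto simp: rr_nonneg\<close>)
    then show "ennreal (pmf \<mu> s * rr s x powr t * F (act (inv s) x) powr t) = ennreal (X s powr t * Y s powr (1-t))"
      by simp
  qed
  ultimately show ?thesis by simp
qed

lemma pw2:
  assumes t: "0 < t0" "t0 < t" "t < 1" and th: "th = (t - t0) / (1 - t0)"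
    and x: "x \<in> space M" and F: "\<And>y. y \<in> space M \<Longrightarrow> F y \<ge> 0"
    and finA: "As t0 F x \<noteq> \<infinity>" and finB: "Bs F x \<noteq> \<infinity>"
  shows "As t F x \<le> ennreal (enn2real (As t0 F x) powr (1 - th) * enn2real (Bs F x) powr th)"
proof -
  have th0: "0 < th" "th < 1" using t unfolding th by (auto simp: divide_less_eq_1)
  have tt: "t0 * (1 - th) + th = t" using t th by (simp add: field_simps)
  define X where "X s = pmf \<mu> s * rr s x powr t0 * F (act (inv s) x) powr t0" for s
  define Y where "Y s = pmf \<mu> s * rr s x * F (act (inv s) x)" for s
  have Y0: "Y s \<ge> 0" if "s \<in> carrier G" for s
    unfolding Y_def using F[OF act_space[OF inv_in[OF that] x]] by (simp add: rr_nonneg)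
  have X0: "X s \<ge> 0" for s unfolding X_def by simp
  have "(\<integral>\<^sup>+s. ennreal (X s powr (1 - th) * Y s powr th) \<partial>count_space (carrier G))
      \<le> ennreal (enn2real (As t0 F x) powr (1 - th) * enn2real (Bs F x) powr th)"
  proof (rule holder_nn)
    show "(\<integral>\<^sup>+s. ennreal (X s) \<partial>count_space (carrier G)) \<le> ennreal (enn2real (As t0 F x))"
      using finA unfolding X_def As_def by (simp add: ennreal_enn2real_if)
    show "(\<integral>\<^sup>+s. ennreal (Y s) \<partial>count_space (carrier G)) \<le> ennreal (enn2real (Bs F x))"
      using finB unfolding Y_def Bs_def by (simp add: ennreal_enn2real_if)
  qed (use th0 X0 Y0 in auto)
  moreover have "As t F x = (\<integral>\<^sup>+s. ennreal (X s powr (1 - th) * Y s powr th) \<partial>count_space (carrier G))"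
    unfolding As_def
  proof (rule nn_integral_cong)
    fix s assume "s \<in> space (count_space (carrier G))"
    then have s: "s \<in> carrier G" by simp
    have "X s powr (1 - th) * Y s powr th = pmf \<mu> s * rr s x powr t * F (act (inv s) x) powr t"
      unfolding X_def Y_def
      by (rule powr_comb) (use F[OF act_space[OF inv_in[OF s] x]] tt in \<open>auto simp: rr_nonneg\<close>)
    then show "ennreal (pmf \<mu> s * rr s x powr t * F (act (inv s) x) powr t) = ennreal (X s powr (1 - th) * Y s powr th)"
      by simp
  qed
  ultimately show ?thesis by simp
qed

lemma kb:
  assumes q: "q > 0" and x: "x \<in> space M"
  shows "ennreal (norm (koopman_mu G \<mu> act M q f x)) \<le> As (1/q) (\<lambda>y. norm (f y) powr q) x"
proof -
  have "ennreal (norm (koopman_mu G \<mu> act M q f x))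
     \<le> (\<integral>\<^sup>+s. ennreal (norm (complex_of_real (pmf \<mu> s * enn2real (RN_deriv M (distr M M (act s)) x) powr (1 / q))
        * f (act (inv s) x))) \<partial>count_space (carrier G))"
    unfolding koopman_mu_def by (rule norm_infsum_le_nn_integral)
  also have "\<dots> = As (1/q) (\<lambda>y. norm (f y) powr q) x"
    unfolding As_def
  proof (rule nn_integral_cong)
    fix s
    have "(norm (f (act (inv s) x)) powr q) powr (1/q) = norm (f (act (inv s) x))"
      using q by (simp add: powr_powr)
    then show "ennreal (norm (complex_of_real (pmf \<mu> s * enn2real (RN_deriv M (distr M M (act s)) x) powr (1 / q))
        * f (act (inv s) x))) = ennreal (pmf \<mu> s * rr s x powr (1/q) * (norm (f (act (inv s) x)) powr q) powr (1/q))"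
      by (simp add: rr_def rn_def norm_mult abs_mult)
  qed
  finally show ?thesis .
qed

lemma keq:
  assumes q: "q > 0"
  shows "koopman_mu G \<mu> act M q (\<lambda>y. complex_of_real (F y powr (1/q))) x = complex_of_real (enn2real (As (1/q) F x))"
proof -
  have "koopman_mu G \<mu> act M q (\<lambda>y. complex_of_real (F y powr (1/q))) x
      = (\<Sum>\<^sub>\<infinity>s\<in>carrier G. complex_of_real (pmf \<mu> s * rr s x powr (1/q) * F (act (inv s) x) powr (1/q)))"
    unfolding koopman_mu_def by (intro infsum_cong) (simp add: rr_def rn_def)
  also have "\<dots> = complex_of_real (enn2real (As (1/q) F x))"
    unfolding As_def by (rule infsum_of_real_nonneg[OF cnt]) simp
  finally show ?thesis .
qed

end

lemma bochner_le_nn: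
  fixes h :: "'a \<Rightarrow> real"
  assumes "(\<integral>\<^sup>+x. ennreal (h x) \<partial>M) \<le> ennreal c" "\<And>x. h x \<ge> 0" "c \<ge> 0"
  shows "(\<integral>x. h x \<partial>M) \<le> c"
proof (cases "integrable M h")
  case True
  then have "(\<integral>x. h x \<partial>M) = enn2real (\<integral>\<^sup>+x. ennreal (h x) \<partial>M)"
    using assms(2) by (intro integral_eq_nn_integral) auto
  also have "\<dots> \<le> enn2real (ennreal c)" using assms(1) by (intro enn2real_mono) auto
  finally show ?thesis using assms(3) by simp
next
  case False
  then show ?thesis using assms(3) by (simp add: not_integrable_integral_eq)
qed

context stat
begin

lemma bnd:
  assumes q: "q > 1" and f: "f \<in> Lq_space M q"
  shows "(\<integral>\<^sup>+x. ennreal (norm (koopman_mu G \<mu> act M q f x) powr q) \<partial>M) \<le> ennreal (\<integral>x. norm (f x) powr q \<partial>M)"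
    and "Lq_norm M q (koopman_mu G \<mu> act M q f) \<le> Lq_norm M q f"
proof -
  define F where "F y = norm (f y) powr q" for y
  have fm[measurable]: "f \<in> borel_measurable M" and Fi: "integrable M F"
    using f by (auto simp: Lq_space_def F_def[abs_def])
  have Fm[measurable]: "F \<in> borel_measurable M" unfolding F_def[abs_def] by measurable
  have F0: "F y \<ge> 0" for y by (simp add: F_def)
  have nnF: "(\<integral>\<^sup>+y. ennreal (F y) \<partial>M) = ennreal (\<integral>y. F y \<partial>M)"
    using Fi F0 by (intro nn_integral_eq_integral) auto
  have BI: "(\<integral>\<^sup>+x. Bs F x \<partial>M) \<le> ennreal (\<integral>y. F y \<partial>M)" using Bs_int[OF Fm] nnF by simp
  have "(\<integral>\<^sup>+x. Bs F x \<partial>M) < \<infinity>" by (rule le_less_trans[OF BI]) simp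
  then have "AE x in M. Bs F x \<noteq> \<infinity>"
    using nn_integral_PInf_AE[OF Bs_meas[OF Fm]] by simp
  then have pt: "AE x in M. ennreal (norm (koopman_mu G \<mu> act M q f x) powr q) \<le> Bs F x"
  proof (rule AE_mp, intro AE_I2 impI)
    fix x assume x: "x \<in> space M" and fin: "Bs F x \<noteq> \<infinity>"
    have "ennreal (norm (koopman_mu G \<mu> act M q f x)) \<le> As (1/q) F x"
      using kb[of q x f] q x by (simp add: F_def[abs_def])
    also have "\<dots> \<le> ennreal (enn2real (Bs F x) powr (1/q))"
      using q x fin F0 by (intro pw1) auto
    finally have "norm (koopman_mu G \<mu> act M q f x) \<le> enn2real (Bs F x) powr (1/q)"
      by (simp add: ennreal_le_iff)
    then have "norm (koopman_mu G \<mu> act M q f x) powr q \<le> (enn2real (Bs F x) powr (1/q)) powr q"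
      using q by (intro powr_mono2) auto
    also have "\<dots> = enn2real (Bs F x)" using q by (simp add: powr_powr)
    finally have "ennreal (norm (koopman_mu G \<mu> act M q f x) powr q) \<le> ennreal (enn2real (Bs F x))"
      by (rule ennreal_leI)
    also have "ennreal (enn2real (Bs F x)) = Bs F x" using fin by (simp add: ennreal_enn2real_if)
    finally show "ennreal (norm (koopman_mu G \<mu> act M q f x) powr q) \<le> Bs F x" .
  qed
  have "(\<integral>\<^sup>+x. ennreal (norm (koopman_mu G \<mu> act M q f x) powr q) \<partial>M) \<le> (\<integral>\<^sup>+x. Bs F x \<partial>M)"
    by (rule nn_integral_mono_AE[OF pt])
  also note BI
  finally show 1: "(\<integral>\<^sup>+x. ennreal (norm (koopman_mu G \<mu> act M q f x) powr q) \<partial>M) \<le> ennreal (\<integral>x. norm (f x) powr q \<partial>M)"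
    by (simp add: F_def)
  have "(\<integral>x. norm (koopman_mu G \<mu> act M q f x) powr q \<partial>M) \<le> (\<integral>x. norm (f x) powr q \<partial>M)"
    by (rule bochner_le_nn[OF 1]) auto
  then show "Lq_norm M q (koopman_mu G \<mu> act M q f) \<le> Lq_norm M q f"
    unfolding Lq_norm_def using q by (intro powr_mono2) auto
qed

definition Sq :: "real \<Rightarrow> real set" where
  "Sq q = {Lq_norm M q (koopman_mu G \<mu> act M q f) | f. f \<in> Lq_space M q \<and> Lq_norm M q f \<le> 1}"

abbreviation Nq :: "real \<Rightarrow> real" where
  "Nq q \<equiv> Lq_opnorm M q (koopman_mu G \<mu> act M q)"

lemma Nq_def': "Nq q = Sup (Sq q)" unfolding Lq_opnorm_def Sq_def ..

lemma zero_Lq: "q > 0 \<Longrightarrow> (\<lambda>_. 0) \<in> Lq_space M q \<and> Lq_norm M q (\<lambda>_. 0) \<le> 1"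
  by (simp add: Lq_space_def Lq_norm_def)

lemma Sq_ne: "q > 0 \<Longrightarrow> Sq q \<noteq> {}"
  unfolding Sq_def using zero_Lq by blast

lemma Sq_le1: "q > 1 \<Longrightarrow> y \<in> Sq q \<Longrightarrow> y \<le> 1"
proof -
  assume q: "q > 1" and y: "y \<in> Sq q"
  then obtain f where f: "y = Lq_norm M q (koopman_mu G \<mu> act M q f)" "f \<in> Lq_space M q" "Lq_norm M q f \<le> 1"
    unfolding Sq_def by blast
  show "y \<le> 1" using bnd(2)[OF q f(2)] f(1,3) by simp
qed

lemma Sq_bdd: "q > 1 \<Longrightarrow> bdd_above (Sq q)"
  using Sq_le1 by (intro bdd_aboveI) blast

lemma Nq_le1: "q > 1 \<Longrightarrow> Nq q \<le> 1"
  unfolding Nq_def' using Sq_le1 Sq_ne by (intro cSup_least) auto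

lemma Nq_ge: "q > 1 \<Longrightarrow> f \<in> Lq_space M q \<Longrightarrow> Lq_norm M q f \<le> 1 \<Longrightarrow> Lq_norm M q (koopman_mu G \<mu> act M q f) \<le> Nq q"
  unfolding Nq_def' using Sq_bdd by (intro cSup_upper) (auto simp: Sq_def)

lemma Nq_nonneg: "q > 1 \<Longrightarrow> Nq q \<ge> 0"
proof -
  assume q: "q > 1"
  have "0 \<le> Lq_norm M q (koopman_mu G \<mu> act M q (\<lambda>_. 0))" by (simp add: Lq_norm_def)
  also have "\<dots> \<le> Nq q" using q zero_Lq[of q] by (intro Nq_ge) auto
  finally show ?thesis .
qed

end

context stat
begin

lemma int_le1:
  fixes F :: "'x \<Rightarrow> real"
  assumes q: "q > 0" and F0: "\<And>y. F y \<ge> 0" and le: "(\<integral>y. F y \<partial>M) powr (1/q) \<le> 1"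
  shows "(\<integral>y. F y \<partial>M) \<le> 1"
proof (rule ccontr)
  assume "\<not> (\<integral>y. F y \<partial>M) \<le> 1"
  then have "1 < (\<integral>y. F y \<partial>M)" by simp
  then have "1 < (\<integral>y. F y \<partial>M) powr (1/q)" using q by (intro gr_one_powr) auto
  then show False using le by simp
qed

lemma mono_step:
  assumes q': "1 < q'" and qq: "q' < q" and th: "th = (1/q' - 1/q) / (1 - 1/q)"
    and f: "f \<in> Lq_space M q'" "Lq_norm M q' f \<le> 1"
  shows "Lq_norm M q' (koopman_mu G \<mu> act M q' f) \<le> Nq q powr (1 - th)"
proof -
  have q: "q > 1" using q' qq by simp
  define t0 where "t0 = 1/q"
  define t where "t = 1/q'"
  have t: "0 < t0" "t0 < t" "t < 1" using q q' qq by (auto simp: t0_def t_def frac_less2)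
  have th': "th = (t - t0) / (1 - t0)" by (simp add: th t0_def t_def)
  have th0: "0 < th" "th < 1" using t unfolding th' by (auto simp: divide_less_eq_1)
  have tt: "t0 * (1 - th) + th = t" using t th' by (simp add: field_simps)
  define F where "F y = norm (f y) powr q'" for y
  have fm[measurable]: "f \<in> borel_measurable M" and Fi: "integrable M F"
    using f by (auto simp: Lq_space_def F_def[abs_def])
  have Fm[measurable]: "F \<in> borel_measurable M" unfolding F_def[abs_def] by measurable
  have F0: "F y \<ge> 0" for y by (simp add: F_def)
  have IF1: "(\<integral>y. F y \<partial>M) \<le> 1"
    using f(2) q' F0 by (intro int_le1[of q']) (auto simp: Lq_norm_def F_def)
  have IF0: "(\<integral>y. F y \<partial>M) \<ge> 0" using F0 by simp
  have nnF: "(\<integral>\<^sup>+y. ennreal (F y) \<partial>M) = ennreal (\<integral>y. F y \<partial>M)"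
    using Fi F0 by (intro nn_integral_eq_integral) auto
  have BI: "(\<integral>\<^sup>+x. Bs F x \<partial>M) \<le> 1"
    using Bs_int[OF Fm] nnF IF1 by (metis ennreal_le_1 order_trans)
  have "(\<integral>\<^sup>+x. Bs F x \<partial>M) < \<infinity>" by (rule le_less_trans[OF BI]) simp
  then have AEB: "AE x in M. Bs F x \<noteq> \<infinity>"
    using nn_integral_PInf_AE[OF Bs_meas[OF Fm]] by simp
  define g where "g y = complex_of_real (F y powr (1/q))" for y
  have gm[measurable]: "g \<in> borel_measurable M" unfolding g_def[abs_def] by measurable
  have ng: "norm (g y) powr q = F y" for y
    using q F0[of y] by (simp add: g_def powr_powr powr_one)
  have gL: "g \<in> Lq_space M q" unfolding Lq_space_def using Fi gm by (simp add: ng)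
  have gn: "Lq_norm M q g \<le> 1"
    unfolding Lq_norm_def ng using IF1 IF0 q by (intro powr_le1) auto
  have KN: "Lq_norm M q (koopman_mu G \<mu> act M q g) \<le> Nq q" by (rule Nq_ge[OF q gL gn])
  define A' where "A' x = enn2real (As t0 F x)" for x
  have A'm[measurable]: "A' \<in> borel_measurable M" unfolding A'_def[abs_def] using As_meas[OF Fm] by measurable
  have A'0: "A' x \<ge> 0" for x by (simp add: A'_def)
  have Kg: "koopman_mu G \<mu> act M q g x = complex_of_real (A' x)" for x
    unfolding g_def A'_def t0_def using keq[of q F x] q by simp
  have nKg: "norm (koopman_mu G \<mu> act M q g x) powr q = A' x powr q" for x
    using A'0[of x] by (simp add: Kg)
  have bg: "(\<integral>\<^sup>+x. ennreal (A' x powr q) \<partial>M) \<le> ennreal (\<integral>x. F x \<partial>M)"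
    using bnd(1)[OF q gL] by (simp add: nKg ng)
  have intA: "integrable M (\<lambda>x. A' x powr q)"
    by (rule integrableI_nonneg) (use bg in \<open>auto simp: top_unique le_less_trans\<close>)
  have Nq0: "Nq q \<ge> 0" by (rule Nq_nonneg[OF q])
  have JA: "(\<integral>x. A' x powr q \<partial>M) \<le> Nq q powr q"
  proof -
    define J where "J = (\<integral>x. A' x powr q \<partial>M)"
    have J0: "J \<ge> 0" unfolding J_def by simp
    have "J powr (1/q) \<le> Nq q" using KN unfolding Lq_norm_def J_def by (simp add: nKg)
    then have "(J powr (1/q)) powr q \<le> Nq q powr q" using q by (intro powr_mono2) auto
    then show ?thesis using J0 q by (simp add: powr_powr powr_one J_def)
  qed
  have nnA: "(\<integral>\<^sup>+x. ennreal (A' x powr q) \<partial>M) \<le> ennreal (Nq q powr q)"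
    using nn_integral_eq_integral[OF intA] JA by (simp add: ennreal_leI)
  define \<alpha> where "\<alpha> = (1 - th) * q' / q"
  define \<beta> where "\<beta> = th * q'"
  have ab: "\<alpha> > 0" "\<beta> > 0" using th0 q q' by (auto simp: \<alpha>_def \<beta>_def)
  have ab1: "\<alpha> + \<beta> = 1"
  proof -
    have "\<alpha> + \<beta> = q' * (t0 * (1 - th) + th)" by (simp add: \<alpha>_def \<beta>_def t0_def field_simps)
    also have "\<dots> = 1" using tt q' by (simp add: t_def)
    finally show ?thesis .
  qed
  define B' where "B' x = enn2real (Bs F x)" for x
  have B'm[measurable]: "B' \<in> borel_measurable M" unfolding B'_def[abs_def] using Bs_meas[OF Fm] by measurable
  have B'0: "B' x \<ge> 0" for x by (simp add: B'_def)
  have nnB: "(\<integral>\<^sup>+x. ennreal (B' x) \<partial>M) \<le> ennreal 1"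
  proof -
    have "(\<integral>\<^sup>+x. ennreal (B' x) \<partial>M) \<le> (\<integral>\<^sup>+x. Bs F x \<partial>M)"
      by (intro nn_integral_mono) (simp add: B'_def ennreal_enn2real_if)
    then show ?thesis using BI by simp
  qed
  have H: "(\<integral>\<^sup>+x. ennreal ((A' x powr q) powr \<alpha> * B' x powr \<beta>) \<partial>M) \<le> ennreal ((Nq q powr q) powr \<alpha> * 1 powr \<beta>)"
    by (rule holder_nn[OF _ _ _ _ ab ab1 nnA nnB]) (auto simp: B'0 Nq0)
  have pt: "AE x in M. ennreal (norm (koopman_mu G \<mu> act M q' f x) powr q') \<le> ennreal ((A' x powr q) powr \<alpha> * B' x powr \<beta>)"
    using AEB
  proof (rule AE_mp, intro AE_I2 impI)
    fix x assume x: "x \<in> space M" and finB: "Bs F x \<noteq> \<infinity>"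
    have "As t0 F x \<le> ennreal (enn2real (Bs F x) powr t0)"
      using t x finB F0 by (intro pw1) auto
    then have finA: "As t0 F x \<noteq> \<infinity>" by (auto simp: top_unique)
    have "ennreal (norm (koopman_mu G \<mu> act M q' f x)) \<le> As t F x"
      using kb[of q' x f] q' x by (simp add: F_def[abs_def] t_def)
    also have "\<dots> \<le> ennreal (A' x powr (1 - th) * B' x powr th)"
      unfolding A'_def B'_def by (rule pw2[OF t th' x F0 finA finB])
    finally have n1: "norm (koopman_mu G \<mu> act M q' f x) \<le> A' x powr (1 - th) * B' x powr th"
      by (simp add: ennreal_le_iff)
    have "norm (koopman_mu G \<mu> act M q' f x) powr q' \<le> (A' x powr (1 - th) * B' x powr th) powr q'"
      using n1 q' by (intro powr_mono2) auto
    also have "\<dots> = A' x powr ((1 - th) * q') * B' x powr (th * q')"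
      by (simp add: powr_mult powr_powr)
    also have "\<dots> = (A' x powr q) powr \<alpha> * B' x powr \<beta>"
      using q by (simp add: powr_powr \<alpha>_def \<beta>_def)
    finally show "ennreal (norm (koopman_mu G \<mu> act M q' f x) powr q') \<le> ennreal ((A' x powr q) powr \<alpha> * B' x powr \<beta>)"
      by (rule ennreal_leI)
  qed
  have "(\<integral>\<^sup>+x. ennreal (norm (koopman_mu G \<mu> act M q' f x) powr q') \<partial>M) \<le> ennreal (Nq q powr (q * \<alpha>))"
    using nn_integral_mono_AE[OF pt] H by (simp add: powr_powr)
  then have "(\<integral>x. norm (koopman_mu G \<mu> act M q' f x) powr q' \<partial>M) \<le> Nq q powr (q * \<alpha>)"
    by (rule bochner_le_nn) auto
  then have "Lq_norm M q' (koopman_mu G \<mu> act M q' f) \<le> (Nq q powr (q * \<alpha>)) powr (1/q')"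
    unfolding Lq_norm_def using q' by (intro powr_mono2) auto
  also have "\<dots> = Nq q powr (1 - th)"
    using q q' by (simp add: powr_powr \<alpha>_def)
  finally show ?thesis .
qed

lemma Nq_mono:
  assumes q': "1 < q'" and qq: "q' < q" and th: "th = (1/q' - 1/q) / (1 - 1/q)"
  shows "Nq q' \<le> Nq q powr (1 - th)"
  unfolding Nq_def'[of q']
proof (rule cSup_least)
  show "Sq q' \<noteq> {}" using Sq_ne q' by simp
  fix y assume "y \<in> Sq q'"
  then obtain f where f: "y = Lq_norm M q' (koopman_mu G \<mu> act M q' f)" "f \<in> Lq_space M q'" "Lq_norm M q' f \<le> 1"
    unfolding Sq_def by blast
  show "y \<le> Nq q powr (1 - th)" using mono_step[OF q' qq th f(2,3)] f(1) by simp
qed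

end

lemma emax: "ennreal (max a 0) = ennreal a"
  by (cases "a \<ge> 0") (auto simp: max_def ennreal_neg)

lemma integral_le_nn:
  fixes h :: "'a \<Rightarrow> real"
  assumes "integrable N h"
  shows "ennreal (\<integral>x. h x \<partial>N) \<le> (\<integral>\<^sup>+x. ennreal (h x) \<partial>N)"
proof -
  have i2: "integrable N (\<lambda>x. max (h x) 0)" using assms by auto
  have "(\<integral>x. h x \<partial>N) \<le> (\<integral>x. max (h x) 0 \<partial>N)" using assms i2 by (intro integral_mono) auto
  then have "ennreal (\<integral>x. h x \<partial>N) \<le> ennreal (\<integral>x. max (h x) 0 \<partial>N)" by (rule ennreal_leI)
  also have "\<dots> = (\<integral>\<^sup>+x. ennreal (max (h x) 0) \<partial>N)"
    using i2 by (intro nn_integral_eq_integral[symmetric]) auto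
  also have "\<dots> = (\<integral>\<^sup>+x. ennreal (h x) \<partial>N)"
    by (simp add: emax)
  finally show ?thesis .
qed

lemma jensen_exp:
  fixes Z :: "'a \<Rightarrow> real"
  assumes P: "prob_space N" and Z: "integrable N Z"
  shows "ennreal (exp (\<integral>x. Z x \<partial>N)) \<le> (\<integral>\<^sup>+x. ennreal (exp (Z x)) \<partial>N)"
proof -
  interpret prob_space N by (rule P)
  define m where "m = (\<integral>x. Z x \<partial>N)"
  define h where "h x = exp m * (1 - m) + exp m * Z x" for x
  have hi: "integrable N h" unfolding h_def[abs_def] using Z by auto
  have "(\<integral>x. h x \<partial>N) = exp m * (1 - m) + exp m * m"
    unfolding h_def m_def using Z by (simp add: prob_space)
  also have "\<dots> = exp m" by (simp add: algebra_simps)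
  finally have ih: "(\<integral>x. h x \<partial>N) = exp m" .
  have pw: "h x \<le> exp (Z x)" for x
  proof -
    have "1 + (Z x - m) \<le> exp (Z x - m)" by (rule exp_ge_add_one_self)
    then have "exp m * (1 + (Z x - m)) \<le> exp m * exp (Z x - m)" by (intro mult_left_mono) auto
    also have "exp m * exp (Z x - m) = exp (Z x)" by (simp add: exp_add[symmetric])
    finally show ?thesis by (simp add: h_def algebra_simps)
  qed
  have "ennreal (exp m) = ennreal (\<integral>x. h x \<partial>N)" by (simp add: ih)
  also have "\<dots> \<le> (\<integral>\<^sup>+x. ennreal (h x) \<partial>N)" by (rule integral_le_nn[OF hi])
  also have "\<dots> \<le> (\<integral>\<^sup>+x. ennreal (exp (Z x)) \<partial>N)"
    by (intro nn_integral_mono ennreal_leI pw)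
  finally show ?thesis by (simp add: m_def)
qed

context stat
begin

lemma CR:
  assumes s: "s \<in> carrier G"
  shows "AE y in M. rn s (act s y) * rn (inv s) y = 1"
proof -
  interpret prob_space M by (rule prob)
  have si: "inv s \<in> carrier G" by (rule inv_in[OF s])
  note [measurable] = act_meas[OF s] act_meas[OF si]
  have "density M (\<lambda>y. rn (inv s) y * rn s (act s y)) = density (density M (rn (inv s))) (\<lambda>y. rn s (act s y))"
    by (rule density_density_eq[symmetric]) measurable
  also have "density M (rn (inv s)) = distr M M (act (inv s))"
    unfolding rn_def by (rule density_RN_deriv[OF ac[OF si]]) simp
  also have "density (distr M M (act (inv s))) (\<lambda>y. rn s (act s y)) = distr (density M (\<lambda>x. rn s (act s (act (inv s) x)))) M (act (inv s))"
    by (rule density_distr) measurable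
  also have "density M (\<lambda>x. rn s (act s (act (inv s) x))) = density M (rn s)"
    by (rule density_cong) (auto simp: act_inv2[OF s])
  also have "density M (rn s) = distr M M (act s)"
    unfolding rn_def by (rule density_RN_deriv[OF ac[OF s]]) simp
  also have "distr (distr M M (act s)) M (act (inv s)) = distr M M (act (inv s) \<circ> act s)"
    by (rule distr_distr) measurable
  also have "\<dots> = distr M M (\<lambda>x. x)"
    by (rule distr_cong) (auto simp: act_inv1[OF s])
  also have "\<dots> = density M (\<lambda>_. 1)" by (simp add: density_1)
  finally have "AE y in M. rn (inv s) y * rn s (act s y) = 1"
    by (subst density_unique_iff[symmetric]) auto
  then show ?thesis by (simp add: mult.commute)
qed

lemma CRr:
  assumes s: "s \<in> carrier G"
  shows "AE y in M. rr s (act s y) * rr (inv s) y = 1"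
  using CR[OF s] by (rule AE_mp) (auto intro!: AE_I2 simp: rr_def enn2real_mult[symmetric])

definition Ent :: "'g \<Rightarrow> ennreal" where
  "Ent s = (\<integral>\<^sup>+x. ennreal (- ln (rn_rho G act M s x)) \<partial>M) - (\<integral>\<^sup>+x. ennreal (ln (rn_rho G act M s x)) \<partial>M)"

lemma rn_rho_eq: "rn_rho G act M s x = rr (inv s) x"
  by (simp add: rn_rho_def rr_def rn_def)

lemma per_s:
  assumes s: "s \<in> carrier G" and c: "0 < c" "c < 1" and fin: "Ent s \<noteq> \<infinity>"
  shows "ennreal (exp (- c * enn2real (Ent s))) \<le> (\<integral>\<^sup>+x. ennreal (rr s x powr (1 - c)) \<partial>M)"
proof -
  interpret prob_space M by (rule prob)
  have si: "inv s \<in> carrier G" by (rule inv_in[OF s])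
  note [measurable] = act_meas[OF s] act_meas[OF si]
  define \<rho> where "\<rho> x = rr (inv s) x" for x
  have \<rho>m[measurable]: "\<rho> \<in> borel_measurable M" unfolding \<rho>_def[abs_def] by measurable
  have \<rho>0: "\<rho> x \<ge> 0" for x by (simp add: \<rho>_def rr_nonneg)
  define P where "P = (\<integral>\<^sup>+x. ennreal (ln (\<rho> x)) \<partial>M)"
  define Q where "Q = (\<integral>\<^sup>+x. ennreal (- ln (\<rho> x)) \<partial>M)"
  have EntPQ: "Ent s = Q - P" unfolding Ent_def P_def Q_def \<rho>_def rn_rho_eq ..
  have P1: "P \<le> 1"
  proof -
    have "P \<le> (\<integral>\<^sup>+x. rn (inv s) x \<partial>M)"
      unfolding P_def
    proof (rule nn_integral_mono)
      fix x
      have "ln (\<rho> x) \<le> \<rho> x"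
      proof (cases "\<rho> x > 0")
        case True then show ?thesis using ln_le_minus_one[OF True] by simp
      next
        case False then have "\<rho> x = 0" using \<rho>0[of x] by simp
        then show ?thesis by simp
      qed
      then have "ennreal (ln (\<rho> x)) \<le> ennreal (\<rho> x)" by (rule ennreal_leI)
      also have "\<dots> \<le> rn (inv s) x" by (simp add: \<rho>_def rr_def ennreal_enn2real_if)
      finally show "ennreal (ln (\<rho> x)) \<le> rn (inv s) x" .
    qed
    then show ?thesis using rn_int[OF si] by simp
  qed
  have Pfin: "P < \<infinity>" by (rule le_less_trans[OF P1]) simp
  have Qfin: "Q < \<infinity>"
  proof (rule ccontr)
    assume "\<not> Q < \<infinity>" then have "Q = \<infinity>" by (simp add: less_top[symmetric])
    then have "Ent s = \<infinity>" using EntPQ by simp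
    then show False using fin by simp
  qed
  have Pm: "(\<integral>\<^sup>+x. ennreal (max (ln (\<rho> x)) 0) \<partial>M) = P" unfolding P_def by (simp add: emax)
  have Qm: "(\<integral>\<^sup>+x. ennreal (max (- ln (\<rho> x)) 0) \<partial>M) = Q" unfolding Q_def by (simp add: emax)
  have ipos: "integrable M (\<lambda>x. max (ln (\<rho> x)) 0)"
    by (rule integrableI_nonneg) (use Pfin in \<open>auto simp: P_def emax\<close>)
  have ineg: "integrable M (\<lambda>x. max (- ln (\<rho> x)) 0)"
    by (rule integrableI_nonneg) (use Qfin in \<open>auto simp: Q_def emax\<close>)
  have lneq: "ln (\<rho> x) = max (ln (\<rho> x)) 0 - max (- ln (\<rho> x)) 0" for x by auto
  have iln: "integrable M (\<lambda>x. ln (\<rho> x))"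
    by (subst lneq) (rule Bochner_Integration.integrable_diff[OF ipos ineg])
  have intln: "(\<integral>x. ln (\<rho> x) \<partial>M) = enn2real P - enn2real Q"
  proof -
    have "(\<integral>x. ln (\<rho> x) \<partial>M) = (\<integral>x. max (ln (\<rho> x)) 0 \<partial>M) - (\<integral>x. max (- ln (\<rho> x)) 0 \<partial>M)"
      by (subst lneq) (rule Bochner_Integration.integral_diff[OF ipos ineg])
    also have "(\<integral>x. max (ln (\<rho> x)) 0 \<partial>M) = enn2real P"
      by (subst integral_eq_nn_integral) (auto simp: P_def emax)
    also have "(\<integral>x. max (- ln (\<rho> x)) 0 \<partial>M) = enn2real Q"
      by (subst integral_eq_nn_integral) (auto simp: Q_def emax)
    finally show ?thesis .
  qed
  have eE: "enn2real Q - enn2real P \<le> enn2real (Ent s)"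
  proof -
    have "Ent s = ennreal (enn2real Q) - ennreal (enn2real P)"
      using EntPQ Pfin Qfin by simp
    also have "\<dots> = ennreal (enn2real Q - enn2real P)" by (rule ennreal_minus) simp
    finally have "Ent s = ennreal (enn2real Q - enn2real P)" .
    then show ?thesis by (cases "enn2real Q - enn2real P \<ge> 0") (auto simp: ennreal_neg)
  qed
  have step1: "(\<integral>\<^sup>+x. ennreal (rr s x powr (1 - c)) \<partial>M) = (\<integral>\<^sup>+x. rn s x * ennreal (rr s x powr (- c)) \<partial>M)"
  proof (rule nn_integral_cong_AE)
    show "AE x in M. ennreal (rr s x powr (1 - c)) = rn s x * ennreal (rr s x powr (- c))"
      using rn_fin[OF s]
    proof (rule AE_mp, intro AE_I2 impI)
      fix x assume "rn s x \<noteq> \<infinity>"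
      then have e: "rn s x = ennreal (rr s x)" by (simp add: rr_def ennreal_enn2real_if)
      have "rr s x * rr s x powr (- c) = rr s x powr (1 - c)"
      proof (cases "rr s x = 0")
        case True then show ?thesis by simp
      next
        case False
        have "rr s x powr (1 + (- c)) = rr s x powr 1 * rr s x powr (- c)" by (rule powr_add)
        then show ?thesis using powr_one[OF rr_nonneg[of s x]] by simp
      qed
      then show "ennreal (rr s x powr (1 - c)) = rn s x * ennreal (rr s x powr (- c))"
        unfolding e using rr_nonneg[of s x] by (simp add: ennreal_mult[symmetric])
    qed
  qed
  also have "\<dots> = (\<integral>\<^sup>+y. ennreal (rr s (act s y) powr (- c)) \<partial>M)"
    by (rule cv[OF s]) measurable
  also have "\<dots> = (\<integral>\<^sup>+y. ennreal (exp (c * ln (\<rho> y))) \<partial>M)"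
  proof (rule nn_integral_cong_AE)
    show "AE y in M. ennreal (rr s (act s y) powr (- c)) = ennreal (exp (c * ln (\<rho> y)))"
      using CRr[OF s]
    proof (rule AE_mp, intro AE_I2 impI)
      fix y assume y1: "rr s (act s y) * rr (inv s) y = 1"
      have "\<rho> y \<noteq> 0" using y1 unfolding \<rho>_def by auto
      then have pos: "\<rho> y > 0" using \<rho>0[of y] by (simp add: less_le)
      have inv: "rr s (act s y) = 1 / \<rho> y" using y1 pos unfolding \<rho>_def by (simp add: field_simps)
      have "rr s (act s y) powr (- c) = (1 / \<rho> y) powr (- c)" by (simp add: inv)
      also have "\<dots> = \<rho> y powr c" using pos by (simp add: powr_divide powr_minus_divide)
      also have "\<dots> = exp (c * ln (\<rho> y))" using pos by (simp add: powr_def)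
      finally show "ennreal (rr s (act s y) powr (- c)) = ennreal (exp (c * ln (\<rho> y)))" by simp
    qed
  qed
  finally have I: "(\<integral>\<^sup>+x. ennreal (rr s x powr (1 - c)) \<partial>M) = (\<integral>\<^sup>+y. ennreal (exp (c * ln (\<rho> y))) \<partial>M)" .
  have "ennreal (exp (\<integral>y. c * ln (\<rho> y) \<partial>M)) \<le> (\<integral>\<^sup>+y. ennreal (exp (c * ln (\<rho> y))) \<partial>M)"
    using iln by (intro jensen_exp prob) auto
  moreover have "exp (- c * enn2real (Ent s)) \<le> exp (\<integral>y. c * ln (\<rho> y) \<partial>M)"
  proof -
    have a: "c * (enn2real Q - enn2real P) \<le> c * enn2real (Ent s)" using eE c by (intro mult_left_mono) auto
    have b: "(\<integral>y. c * ln (\<rho> y) \<partial>M) = c * (enn2real P - enn2real Q)" by (simp add: intln)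
    have "- c * enn2real (Ent s) \<le> (\<integral>y. c * ln (\<rho> y) \<partial>M)"
      unfolding b using a by (simp add: right_diff_distrib)
    then show ?thesis by simp
  qed
  ultimately show ?thesis unfolding I using ennreal_leI order_trans by blast
qed

end

context stat
begin

lemma pmf_carrier:
  "(\<integral>\<^sup>+s. ennreal (pmf \<mu> s) * h s \<partial>count_space (carrier G)) = (\<integral>\<^sup>+s. h s \<partial>measure_pmf \<mu>)"
proof -
  have "(\<integral>\<^sup>+s. h s \<partial>measure_pmf \<mu>) = (\<integral>\<^sup>+s. ennreal (pmf \<mu> s) * h s \<partial>count_space UNIV)"
    by (rule nn_integral_measure_pmf)
  also have "\<dots> = (\<integral>\<^sup>+s. (ennreal (pmf \<mu> s) * h s) * indicator (carrier G) s \<partial>count_space UNIV)"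
  proof (intro nn_integral_cong)
    fix s
    show "ennreal (pmf \<mu> s) * h s = ennreal (pmf \<mu> s) * h s * indicator (carrier G) s"
    proof (cases "s \<in> carrier G")
      case False
      then have "s \<notin> set_pmf \<mu>" using supp by blast
      then have "pmf \<mu> s = 0" by (simp add: set_pmf_iff)
      then show ?thesis by simp
    qed simp
  qed
  also have "\<dots> = (\<integral>\<^sup>+s. ennreal (pmf \<mu> s) * h s \<partial>count_space (carrier G))"
    by (simp add: nn_integral_count_space_indicator)
  finally show ?thesis by simp
qed

lemma As1_int:
  "(\<integral>\<^sup>+x. As t (\<lambda>_. 1) x \<partial>M) = (\<integral>\<^sup>+s. (\<integral>\<^sup>+x. ennreal (rr s x powr t) \<partial>M) \<partial>measure_pmf \<mu>)"
proof -
  have "(\<integral>\<^sup>+x. As t (\<lambda>_. 1) x \<partial>M) = (\<integral>\<^sup>+s. \<integral>\<^sup>+x. ennreal (pmf \<mu> s * rr s x powr t * 1 powr t) \<partial>M \<partial>count_space (carrier G))"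
    unfolding As_def by (rule nn_integral_count_space_nn_integral[OF cnt]) measurable
  also have "\<dots> = (\<integral>\<^sup>+s. ennreal (pmf \<mu> s) * (\<integral>\<^sup>+x. ennreal (rr s x powr t) \<partial>M) \<partial>count_space (carrier G))"
  proof (rule nn_integral_cong)
    fix s
    have "(\<integral>\<^sup>+x. ennreal (pmf \<mu> s * rr s x powr t * 1 powr t) \<partial>M) = (\<integral>\<^sup>+x. ennreal (pmf \<mu> s) * ennreal (rr s x powr t) \<partial>M)"
      by (intro nn_integral_cong) (simp add: ennreal_mult')
    also have "\<dots> = ennreal (pmf \<mu> s) * (\<integral>\<^sup>+x. ennreal (rr s x powr t) \<partial>M)"
      by (rule nn_integral_cmult) measurable
    finally show "(\<integral>\<^sup>+x. ennreal (pmf \<mu> s * rr s x powr t * 1 powr t) \<partial>M) = \<dots>" .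
  qed
  also have "\<dots> = (\<integral>\<^sup>+s. (\<integral>\<^sup>+x. ennreal (rr s x powr t) \<partial>M) \<partial>measure_pmf \<mu>)"
    by (rule pmf_carrier)
  finally show ?thesis .
qed

lemma Lyap:
  assumes q: "q > 1"
  shows "(\<integral>\<^sup>+x. As (1/q) (\<lambda>_. 1) x \<partial>M) \<le> ennreal (Nq q)"
proof -
  interpret prob_space M by (rule prob)
  define t0 where "t0 = 1/q"
  have t: "0 < t0" "t0 < 1" using q by (auto simp: t0_def)
  define F :: "'x \<Rightarrow> real" where "F = (\<lambda>_. 1)"
  have Fm[measurable]: "F \<in> borel_measurable M" by (simp add: F_def)
  have BI: "(\<integral>\<^sup>+x. Bs F x \<partial>M) \<le> 1"
    using Bs_int[OF Fm] by (simp add: F_def emeasure_space_1)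
  have "(\<integral>\<^sup>+x. Bs F x \<partial>M) < \<infinity>" by (rule le_less_trans[OF BI]) simp
  then have AEB: "AE x in M. Bs F x \<noteq> \<infinity>"
    using nn_integral_PInf_AE[OF Bs_meas[OF Fm]] by simp
  define A' where "A' x = enn2real (As t0 F x)" for x
  have A'm[measurable]: "A' \<in> borel_measurable M" unfolding A'_def[abs_def] using As_meas[OF Fm] by measurable
  have A'0: "A' x \<ge> 0" for x by (simp add: A'_def)
  have AEA: "AE x in M. As t0 F x = ennreal (A' x)"
    using AEB
  proof (rule AE_mp, intro AE_I2 impI)
    fix x assume x: "x \<in> space M" and finB: "Bs F x \<noteq> \<infinity>"
    have "As t0 F x \<le> ennreal (enn2real (Bs F x) powr t0)"
      using t x finB by (intro pw1) (auto simp: F_def)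
    then have "As t0 F x \<noteq> \<infinity>" by (auto simp: top_unique)
    then show "As t0 F x = ennreal (A' x)" by (simp add: A'_def ennreal_enn2real_if)
  qed
  define g where "g y = complex_of_real (F y powr (1/q))" for y
  have g1: "g y = 1" for y by (simp add: g_def F_def)
  have ng: "norm (g y) powr q = 1" for y by (simp add: g1)
  have gL: "g \<in> Lq_space M q" unfolding Lq_space_def by (simp add: ng g_def[abs_def] F_def)
  have gn: "Lq_norm M q g \<le> 1" unfolding Lq_norm_def ng by (simp add: prob_space)
  have KN: "Lq_norm M q (koopman_mu G \<mu> act M q g) \<le> Nq q" by (rule Nq_ge[OF q gL gn])
  have Kg: "koopman_mu G \<mu> act M q g x = complex_of_real (A' x)" for x
    unfolding g_def A'_def t0_def using keq[of q F x] q by simp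
  have nKg: "norm (koopman_mu G \<mu> act M q g x) powr q = A' x powr q" for x
    using A'0[of x] by (simp add: Kg)
  have bg: "(\<integral>\<^sup>+x. ennreal (A' x powr q) \<partial>M) \<le> ennreal 1"
    using bnd(1)[OF q gL] by (simp add: nKg ng prob_space)
  have intA: "integrable M (\<lambda>x. A' x powr q)"
    by (rule integrableI_nonneg) (use bg in \<open>auto simp: top_unique le_less_trans\<close>)
  define J where "J = (\<integral>x. A' x powr q \<partial>M)"
  have J0: "J \<ge> 0" unfolding J_def by simp
  have nnJ: "(\<integral>\<^sup>+x. ennreal (A' x powr q) \<partial>M) \<le> ennreal J"
    unfolding J_def using nn_integral_eq_integral[OF intA] by simp
  have H: "(\<integral>\<^sup>+x. ennreal ((A' x powr q) powr (1/q) * 1 powr (1 - 1/q)) \<partial>M) \<le> ennreal (J powr (1/q) * 1 powr (1 - 1/q))"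
    by (rule holder_nn[OF _ _ _ _ _ _ _ nnJ]) (use q J0 in \<open>auto simp: emeasure_space_1\<close>)
  have "(\<integral>\<^sup>+x. As t0 F x \<partial>M) = (\<integral>\<^sup>+x. ennreal (A' x) \<partial>M)"
    by (rule nn_integral_cong_AE[OF AEA])
  also have "\<dots> = (\<integral>\<^sup>+x. ennreal ((A' x powr q) powr (1/q) * 1 powr (1 - 1/q)) \<partial>M)"
    using q by (intro nn_integral_cong) (simp add: powr_powr A'0)
  also have "\<dots> \<le> ennreal (J powr (1/q))" using H by simp
  also have "J powr (1/q) = Lq_norm M q (koopman_mu G \<mu> act M q g)"
    unfolding Lq_norm_def J_def by (simp add: nKg)
  also have "ennreal \<dots> \<le> ennreal (Nq q)" using KN by (rule ennreal_leI)
  finally show ?thesis by (simp add: t0_def F_def)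
qed

lemma Lpos:
  assumes q: "q > 1"
  shows "0 < (\<integral>\<^sup>+x. As (1/q) (\<lambda>_. 1) x \<partial>M)"
proof (rule ccontr)
  assume "\<not> 0 < (\<integral>\<^sup>+x. As (1/q) (\<lambda>_. 1) x \<partial>M)"
  then have "(\<integral>\<^sup>+s. (\<integral>\<^sup>+x. ennreal (rr s x powr (1/q)) \<partial>M) \<partial>measure_pmf \<mu>) = 0"
    by (simp add: As1_int)
  then have "AE s in measure_pmf \<mu>. (\<integral>\<^sup>+x. ennreal (rr s x powr (1/q)) \<partial>M) = 0"
    by (subst (asm) nn_integral_0_iff_AE) auto
  then have all: "\<forall>s\<in>set_pmf \<mu>. (\<integral>\<^sup>+x. ennreal (rr s x powr (1/q)) \<partial>M) = 0"
    by (simp add: AE_measure_pmf_iff)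
  obtain s where s: "s \<in> set_pmf \<mu>" using set_pmf_not_empty[of \<mu>] by auto
  then have sc: "s \<in> carrier G" using supp by blast
  have "AE x in M. ennreal (rr s x powr (1/q)) = 0"
    using all s by (subst nn_integral_0_iff_AE[symmetric]) auto
  then have "AE x in M. rn s x = 0"
    using rn_fin[OF sc]
    by (rule AE_mp[OF AE_conjI]) (auto intro!: AE_I2 simp: rr_def ennreal_enn2real_if enn2real_eq_0_iff)
  then have "(\<integral>\<^sup>+x. rn s x \<partial>M) = 0" by (simp add: nn_integral_0_iff_AE)
  then show False using rn_int[OF sc] by simp
qed

lemma entropy_lb:
  assumes q: "q > 1" and Hfin: "furstenberg_entropy G \<mu> act M \<noteq> \<infinity>"
  shows "ennreal (exp (- (1 - 1/q) * enn2real (furstenberg_entropy G \<mu> act M))) \<le> (\<integral>\<^sup>+x. As (1/q) (\<lambda>_. 1) x \<partial>M)"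
proof -
  define H where "H = furstenberg_entropy G \<mu> act M"
  define c where "c = 1 - 1/q"
  have c: "0 < c" "c < 1" using q by (auto simp: c_def)
  have "H = (\<Sum>\<^sub>\<infinity>s\<in>carrier G. ennreal (pmf \<mu> s) * Ent s)"
    unfolding H_def furstenberg_entropy_def Ent_def ..
  also have "\<dots> = (\<integral>\<^sup>+s. ennreal (pmf \<mu> s) * Ent s \<partial>count_space (carrier G))"
    by (rule infsum_ennreal_eq_nn_integral[OF cnt])
  also have "\<dots> = (\<integral>\<^sup>+s. Ent s \<partial>measure_pmf \<mu>)" by (rule pmf_carrier)
  finally have HE: "H = (\<integral>\<^sup>+s. Ent s \<partial>measure_pmf \<mu>)" .
  have Hf: "H \<noteq> \<infinity>" using Hfin by (simp add: H_def)
  have AEE: "AE s in measure_pmf \<mu>. Ent s \<noteq> \<infinity>"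
    using nn_integral_PInf_AE[of Ent "measure_pmf \<mu>"] Hf HE by simp
  define e where "e s = enn2real (Ent s)" for s
  have ee: "(\<integral>\<^sup>+s. ennreal (e s) \<partial>measure_pmf \<mu>) = H"
    unfolding HE e_def using AEE by (intro nn_integral_cong_AE) (auto simp: ennreal_enn2real_if elim!: AE_mp)
  have efin: "(\<integral>\<^sup>+s. ennreal (e s) \<partial>measure_pmf \<mu>) < \<infinity>" using ee Hf by (simp add: less_top[symmetric])
  have ie: "integrable (measure_pmf \<mu>) e"
    by (rule integrableI_nonneg[OF _ _ efin]) (auto simp: e_def)
  have "(\<integral>s. e s \<partial>measure_pmf \<mu>) = enn2real (\<integral>\<^sup>+s. ennreal (e s) \<partial>measure_pmf \<mu>)"
    by (rule integral_eq_nn_integral) (auto simp: e_def)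
  then have inte: "(\<integral>s. e s \<partial>measure_pmf \<mu>) = enn2real H" by (simp only: ee)
  have "ennreal (exp (\<integral>s. - c * e s \<partial>measure_pmf \<mu>)) \<le> (\<integral>\<^sup>+s. ennreal (exp (- c * e s)) \<partial>measure_pmf \<mu>)"
    by (rule jensen_exp) (auto simp: measure_pmf.prob_space_axioms ie)
  also have "\<dots> \<le> (\<integral>\<^sup>+s. (\<integral>\<^sup>+x. ennreal (rr s x powr (1/q)) \<partial>M) \<partial>measure_pmf \<mu>)"
  proof (rule nn_integral_mono_AE)
    show "AE s in measure_pmf \<mu>. ennreal (exp (- c * e s)) \<le> (\<integral>\<^sup>+x. ennreal (rr s x powr (1/q)) \<partial>M)"
      using AEE unfolding AE_measure_pmf_iff
    proof (intro ballI impI)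
      fix s assume s: "s \<in> set_pmf \<mu>" and fin: "\<forall>s\<in>set_pmf \<mu>. Ent s \<noteq> \<infinity>"
      have "ennreal (exp (- c * e s)) \<le> (\<integral>\<^sup>+x. ennreal (rr s x powr (1 - c)) \<partial>M)"
        unfolding e_def using s fin supp c by (intro per_s) auto
      then show "ennreal (exp (- c * e s)) \<le> (\<integral>\<^sup>+x. ennreal (rr s x powr (1/q)) \<partial>M)"
        by (simp add: c_def)
    qed
  qed
  also have "\<dots> = (\<integral>\<^sup>+x. As (1/q) (\<lambda>_. 1) x \<partial>M)" by (rule As1_int[symmetric])
  finally show ?thesis using inte by (simp add: H_def c_def)
qed

lemma main_q:
  assumes q: "q > 1"
  shows "0 < Nq q" and "furstenberg_entropy G \<mu> act M \<noteq> \<infinity> \<Longrightarrow> exp (- (1 - 1/q) * enn2real (furstenberg_entropy G \<mu> act M)) \<le> Nq q"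
proof -
  have N0: "Nq q \<ge> 0" by (rule Nq_nonneg[OF q])
  have "0 < ennreal (Nq q)" using Lpos[OF q] Lyap[OF q] by (rule less_le_trans)
  then show "0 < Nq q" by simp
  assume "furstenberg_entropy G \<mu> act M \<noteq> \<infinity>"
  then have "ennreal (exp (- (1 - 1/q) * enn2real (furstenberg_entropy G \<mu> act M))) \<le> ennreal (Nq q)"
    using entropy_lb[OF q] Lyap[OF q] by (blast intro: order_trans)
  then show "exp (- (1 - 1/q) * enn2real (furstenberg_entropy G \<mu> act M)) \<le> Nq q"
    using N0 by (simp add: ennreal_le_iff)
qed

end

theorem proposition6p6:
  fixes G (structure) and \<mu> :: "'g pmf" and act :: "'g \<Rightarrow> 'x::polish_space \<Rightarrow> 'x"
    and M :: "'x measure"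
  assumes "group G" and "countable (carrier G)" and "set_pmf \<mu> \<subseteq> carrier G"
    and "sets M = sets borel"
    and "stationary_space G \<mu> act M"
  shows "(\<forall>p p'. 2 \<le> p \<longrightarrow> p \<le> p' \<longrightarrow>
            - p * ln (Lq_opnorm M (p / (p - 1)) (koopman_mu G \<mu> act M (p / (p - 1))))
            \<le> - p' * ln (Lq_opnorm M (p' / (p' - 1)) (koopman_mu G \<mu> act M (p' / (p' - 1)))))
       \<and> (\<forall>p::real. 2 \<le> p \<longrightarrow>
            0 \<le> - p * ln (Lq_opnorm M (p / (p - 1)) (koopman_mu G \<mu> act M (p / (p - 1))))
          \<and> ennreal (- p * ln (Lq_opnorm M (p / (p - 1)) (koopman_mu G \<mu> act M (p / (p - 1)))))
              \<le> furstenberg_entropy G \<mu> act M)"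
proof -
  interpret stat G \<mu> act M by (rule stat.intro[OF assms(1-3) assms(5)])
  have qgt: "p / (p - 1) > 1" if "2 \<le> p" for p :: real using that by (simp add: field_simps)
  have invq: "1 / (p / (p - 1)) = 1 - 1 / p" if "2 \<le> p" for p :: real using that by (simp add: field_simps)
  have P2: "0 \<le> - p * ln (Nq (p / (p - 1))) \<and>
      ennreal (- p * ln (Nq (p / (p - 1)))) \<le> furstenberg_entropy G \<mu> act M" if p: "2 \<le> p" for p :: real
  proof -
    define q where "q = p / (p - 1)"
    have q: "q > 1" unfolding q_def by (rule qgt[OF p])
    have N0: "0 < Nq q" by (rule main_q(1)[OF q])
    have N1: "Nq q \<le> 1" by (rule Nq_le1[OF q])
    have "ln (Nq q) \<le> 0" using N0 N1 by simp
    then have A: "0 \<le> - p * ln (Nq q)" using p by (simp add: mult_nonneg_nonpos)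
    have B: "ennreal (- p * ln (Nq q)) \<le> furstenberg_entropy G \<mu> act M"
    proof (cases "furstenberg_entropy G \<mu> act M = \<infinity>")
      case True then show ?thesis by simp
    next
      case False
      define H where "H = enn2real (furstenberg_entropy G \<mu> act M)"
      have H0: "H \<ge> 0" by (simp add: H_def)
      have "exp (- (1 - 1/q) * H) \<le> Nq q" unfolding H_def by (rule main_q(2)[OF q False])
      moreover have "1 - 1/q = 1/p" unfolding q_def using invq[OF p] by simp
      ultimately have "exp (- H / p) \<le> Nq q" by simp
      then have "ln (exp (- H / p)) \<le> ln (Nq q)" using N0 by (subst ln_le_cancel_iff) auto
      then have "- H / p \<le> ln (Nq q)" by simp
      then have "- p * ln (Nq q) \<le> H" using p by (simp add: field_simps)
      then have "ennreal (- p * ln (Nq q)) \<le> ennreal H" by (rule ennreal_leI)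
      also have "ennreal H = furstenberg_entropy G \<mu> act M"
        unfolding H_def using False by (simp add: ennreal_enn2real_if)
      finally show ?thesis .
    qed
    show ?thesis using A B by (simp add: q_def)
  qed
  have P1: "- p * ln (Nq (p / (p - 1))) \<le> - p' * ln (Nq (p' / (p' - 1)))"
    if p: "2 \<le> p" and pp: "p \<le> p'" for p p' :: real
  proof (cases "p = p'")
    case True then show ?thesis by simp
  next
    case False
    then have pp': "p < p'" using pp by simp
    have p': "2 \<le> p'" using p pp by simp
    define q where "q = p / (p - 1)"
    define q' where "q' = p' / (p' - 1)"
    have q: "q > 1" unfolding q_def by (rule qgt[OF p])
    have q': "q' > 1" unfolding q'_def by (rule qgt[OF p'])
    have iq: "1/q = 1 - 1/p" unfolding q_def by (rule invq[OF p])
    have iq': "1/q' = 1 - 1/p'" unfolding q'_def by (rule invq[OF p'])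
    have "1/p' < 1/p" using p pp' by (simp add: frac_less2)
    then have "1/q < 1/q'" using iq iq' by simp
    then have qq: "q' < q" using q q' by (simp add: field_simps)
    define th where "th = (1/q' - 1/q) / (1 - 1/q)"
    have th1: "1 - th = p / p'"
      unfolding th_def iq iq' using p p' by (simp add: field_simps)
    have N0: "0 < Nq q" by (rule main_q(1)[OF q])
    have N0': "0 < Nq q'" by (rule main_q(1)[OF q'])
    have "Nq q' \<le> Nq q powr (1 - th)" by (rule Nq_mono[OF q' qq th_def])
    then have "ln (Nq q') \<le> ln (Nq q powr (1 - th))" using N0 N0' by (subst ln_le_cancel_iff) auto
    also have "\<dots> = (p / p') * ln (Nq q)" using N0 by (simp add: ln_powr th1)
    finally have "ln (Nq q') \<le> (p / p') * ln (Nq q)" .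
    then have "p' * ln (Nq q') \<le> p' * ((p / p') * ln (Nq q))" using p' by (intro mult_left_mono) auto
    also have "\<dots> = p * ln (Nq q)" using p' by simp
    finally show ?thesis by (simp add: q_def q'_def)
  qed
  show ?thesis using P1 P2 by blast
qed

end
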